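(* Let $l\geq 2$ be an integer and let $n=\binom{2l+1}{l}+1$. Then $\chi'_2(\overleftrightarrow{K_n})<\chi'_{1,2}(\overleftrightarrow{K_n})$.
   Context: For a simple graph $G$, the symmetric digraph $\overleftrightarrow{G}$ is obtained by replacing each edge $uv$ of $G$ by the pair of opposite arcs $\overrightarrow{uv}$ and $\overrightarrow{vu}$; $K_n$ is the complete graph on $n$ vertices. A monochromatic 2-path is a pair of arcs $\overrightarrow{uv},\overrightarrow{vw}$ with $w\neq u$ of the same colour; a monochromatic 2-cycle is a pair $\overrightarrow{uv},\overrightarrow{vu}$ of the same colour. $\chi'_{1,2}(\overleftrightarrow{G})$ is the least number of colours in an arc-colouring of $\overleftrightarrow{G}$ with no monochromatic 2-cycles and no monochromatic 2-paths; $\chi'_{2}(\overleftrightarrow{G})$ is the least number of colours in an arc-colouring with no monochromatic 2-paths. *)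

theory Defs
  imports Main
begin

text \<open>A simple graph is given by a vertex set V and a symmetric irreflexive
adjacency relation E.  The symmetric digraph has the arc (u,v) for every
edge uv, in both directions.\<close>

definition sym_arcs :: "'a set \<Rightarrow> ('a \<Rightarrow> 'a \<Rightarrow> bool) \<Rightarrow> ('a \<times> 'a) set" where
  "sym_arcs V E = {(u, v). u \<in> V \<and> v \<in> V \<and> E u v}"

definition arc_colouring :: "'a set \<Rightarrow> ('a \<Rightarrow> 'a \<Rightarrow> bool) \<Rightarrow> nat \<Rightarrow> ('a \<times> 'a \<Rightarrow> nat) \<Rightarrow> bool" where
  "arc_colouring V E k c \<longleftrightarrow> (\<forall>a \<in> sym_arcs V E. c a < k)"

definition no_mono_2path :: "'a set \<Rightarrow> ('a \<Rightarrow> 'a \<Rightarrow> bool) \<Rightarrow> ('a \<times> 'a \<Rightarrow> nat) \<Rightarrow> bool" where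
  "no_mono_2path V E c \<longleftrightarrow>
     (\<forall>u v w. (u, v) \<in> sym_arcs V E \<and> (v, w) \<in> sym_arcs V E \<and> w \<noteq> u \<longrightarrow> c (u, v) \<noteq> c (v, w))"

definition no_mono_2cycle :: "'a set \<Rightarrow> ('a \<Rightarrow> 'a \<Rightarrow> bool) \<Rightarrow> ('a \<times> 'a \<Rightarrow> nat) \<Rightarrow> bool" where
  "no_mono_2cycle V E c \<longleftrightarrow>
     (\<forall>u v. (u, v) \<in> sym_arcs V E \<longrightarrow> c (u, v) \<noteq> c (v, u))"

definition chi2 :: "'a set \<Rightarrow> ('a \<Rightarrow> 'a \<Rightarrow> bool) \<Rightarrow> nat" where
  "chi2 V E = (LEAST k. \<exists>c. arc_colouring V E k c \<and> no_mono_2path V E c)"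

definition chi12 :: "'a set \<Rightarrow> ('a \<Rightarrow> 'a \<Rightarrow> bool) \<Rightarrow> nat" where
  "chi12 V E = (LEAST k. \<exists>c. arc_colouring V E k c \<and> no_mono_2cycle V E c \<and> no_mono_2path V E c)"

definition K_V :: "nat \<Rightarrow> nat set" where "K_V n = {..<n}"
definition K_E :: "nat \<Rightarrow> nat \<Rightarrow> bool" where "K_E u v \<longleftrightarrow> u \<noteq> v"

end

theory Submission imports Defs "HOL-Combinatorics.Multiset_Permutations" begin

lemma card_prefix_perms:
  assumes U: "finite U" and AU: "A \<subseteq> U"
  shows "card {xs \<in> permutations_of_set U. set (take (card A) xs) = A}
         = fact (card A) * fact (card U - card A)"
proof -
  have fA: "finite A" using U AU finite_subset by blast
  let ?Q = "{xs \<in> permutations_of_set U. set (take (card A) xs) = A}"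
  let ?P = "permutations_of_set A \<times> permutations_of_set (U - A)"
  have inj: "inj_on (\<lambda>(p, q). p @ q) ?P"
  proof (rule inj_onI, clarsimp)
    fix p q p' q'
    assume "p \<in> permutations_of_set A" "p' \<in> permutations_of_set A" "p @ q = p' @ q'"
    moreover have "length p = length p'" using calculation
      by (simp add: length_finite_permutations_of_set)
    ultimately show "p = p' \<and> q = q'" by simp
  qed
  have img: "(\<lambda>(p, q). p @ q) ` ?P = ?Q"
  proof
    show "(\<lambda>(p, q). p @ q) ` ?P \<subseteq> ?Q"
    proof (rule image_subsetI)
      fix x assume "x \<in> ?P"
      then obtain p q where x: "x = (p, q)" and p: "p \<in> permutations_of_set A" and q: "q \<in> permutations_of_set (U - A)" by blast
      have lp: "length p = card A" using p by (simp add: length_finite_permutations_of_set)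
      have sp: "set p = A" "distinct p" using p by (auto dest: permutations_of_setD)
      have sq: "set q = U - A" "distinct q" using q by (auto dest: permutations_of_setD)
      show "(case x of (p, q) \<Rightarrow> p @ q) \<in> ?Q" unfolding x
        using lp sp sq AU by (auto intro!: permutations_of_setI)
    qed
  next
    show "?Q \<subseteq> (\<lambda>(p, q). p @ q) ` ?P"
    proof clarsimp
      fix xs assume xs: "xs \<in> permutations_of_set U" and t: "set (take (card A) xs) = A"
      have sx: "set xs = U" "distinct xs" using xs by (auto dest: permutations_of_setD)
      have d1: "distinct (take (card A) xs)" "distinct (drop (card A) xs)" using sx by auto
      have disj: "set (take (card A) xs) \<inter> set (drop (card A) xs) = {}"
        using sx(2) by (metis append_take_drop_id distinct_append)
      have un: "set (take (card A) xs) \<union> set (drop (card A) xs) = U"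
        using sx(1) by (metis append_take_drop_id set_append)
      have "set (drop (card A) xs) = U - A" using disj un t by blast
      hence "(take (card A) xs, drop (card A) xs) \<in> ?P"
        using d1 t by (auto intro!: permutations_of_setI)
      thus "xs \<in> (\<lambda>(p, q). p @ q) ` ?P" by (metis (no_types, lifting) append_take_drop_id case_prod_conv image_eqI)
    qed
  qed
  have "card ?Q = card ?P" using card_image[OF inj] img by simp
  also have "\<dots> = fact (card A) * fact (card (U - A))"
    using U fA by (simp add: card_cartesian_product)
  also have "card (U - A) = card U - card A" using fA AU by (simp add: card_Diff_subset)
  finally show ?thesis .
qed

lemma sperner:
  assumes U: "finite U" and FU: "F \<subseteq> Pow U"
    and anti: "\<And>A B. A \<in> F \<Longrightarrow> B \<in> F \<Longrightarrow> A \<subseteq> B \<Longrightarrow> A = B"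
  shows "card F \<le> card U choose (card U div 2)"
proof -
  let ?N = "card U"
  let ?Q = "\<lambda>A. {xs \<in> permutations_of_set U. set (take (card A) xs) = A}"
  have fF: "finite F" using U FU by (meson finite_Pow_iff finite_subset)
  have disj: "?Q A \<inter> ?Q B = {}" if "A \<in> F" "B \<in> F" "A \<noteq> B" for A B
  proof (rule ccontr)
    assume "?Q A \<inter> ?Q B \<noteq> {}"
    then obtain xs where a: "set (take (card A) xs) = A" and b: "set (take (card B) xs) = B" by blast
    have "A \<subseteq> B \<or> B \<subseteq> A"
    proof (cases "card A \<le> card B")
      case True
      hence "take (card A) xs = take (card A) (take (card B) xs)" by (simp add: min_def)
      hence "A \<subseteq> B" using a b by (metis set_take_subset)
      thus ?thesis by blast
    next
      case False
      hence "take (card B) xs = take (card B) (take (card A) xs)" by (simp add: min_def)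
      hence "B \<subseteq> A" using a b by (metis set_take_subset)
      thus ?thesis by blast
    qed
    thus False using anti that by blast
  qed
  have "(\<Sum>A\<in>F. card (?Q A)) = card (\<Union>A\<in>F. ?Q A)"
    by (rule card_UN_disjoint[symmetric]) (use fF disj in auto)
  also have "\<dots> \<le> card (permutations_of_set U)"
    by (rule card_mono) auto
  also have "\<dots> = fact ?N" using U by simp
  finally have sumle: "(\<Sum>A\<in>F. card (?Q A)) \<le> fact ?N" .
  have each: "fact ?N \<le> card (?Q A) * (?N choose (?N div 2))" if "A \<in> F" for A
  proof -
    have AU: "A \<subseteq> U" using that FU by auto
    hence kle: "card A \<le> ?N" using U card_mono by blast
    have "fact ?N = fact (card A) * fact (?N - card A) * (?N choose card A)"
      using binomial_fact_lemma[OF kle] by simp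
    also have "\<dots> \<le> fact (card A) * fact (?N - card A) * (?N choose (?N div 2))"
      by (intro mult_left_mono binomial_maximum) simp
    also have "\<dots> = card (?Q A) * (?N choose (?N div 2))"
      using card_prefix_perms[OF U AU] by simp
    finally show ?thesis .
  qed
  have "card F * fact ?N = (\<Sum>A\<in>F. fact ?N)" by simp
  also have "\<dots> \<le> (\<Sum>A\<in>F. card (?Q A) * (?N choose (?N div 2)))"
    by (intro sum_mono each)
  also have "\<dots> = (\<Sum>A\<in>F. card (?Q A)) * (?N choose (?N div 2))"
    by (simp add: sum_distrib_right)
  also have "\<dots> \<le> fact ?N * (?N choose (?N div 2))"
    using sumle by (intro mult_right_mono) auto
  finally have "card F * fact ?N \<le> (?N choose (?N div 2)) * fact ?N" by (simp add: mult.commute)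
  thus ?thesis by simp
qed


lemma arcs_K: "sym_arcs (K_V n) K_E = {(u, v). u < n \<and> v < n \<and> u \<noteq> v}"
  by (auto simp: sym_arcs_def K_V_def K_E_def)

lemma binom_ineq:
  assumes "l \<ge> (1::nat)"
  shows "((2 * l + 1) choose l) + 1 \<le> 2 * ((2 * l) choose l)"
proof -
  obtain m where l: "l = Suc m" using assms by (cases l) auto
  have e: "(2 * l + 1) choose l = ((2 * l) choose m) + ((2 * l) choose l)"
    using l by simp
  have a: "(2*l - m) * ((2*l) choose m) = (2*l) * ((2*l - 1) choose m)"
    by (rule binomial_absorb_comp)
  have b: "l * ((2*l) choose l) = (2*l) * ((2*l - 1) choose (l - 1))"
    using times_binomial_minus1_eq[of l "2*l"] l by simp
  have c: "Suc l * ((2*l) choose m) = l * ((2*l) choose l)"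
    using a b l by (simp add: numeral_2_eq_2)
  have pos: "0 < (2*l) choose l" by simp
  have "Suc l * ((2*l) choose m) < Suc l * ((2*l) choose l)"
    using c pos by simp
  hence "(2*l) choose m < (2*l) choose l" by (meson mult_less_cancel1)
  thus ?thesis using e by simp
qed

lemma chi2_upper:
  assumes n: "n \<le> 2 * ((2 * l) choose l)"
  shows "chi2 (K_V n) K_E \<le> 2 * l + 1"
proof -
  define W where "W = {S. S \<subseteq> {..<2*l} \<and> card S = l} \<times> (UNIV :: bool set)"
  have fW: "finite W" unfolding W_def by (auto intro: finite_subset[of _ "Pow {..<2*l}"])
  have cW: "card W = 2 * ((2 * l) choose l)"
    unfolding W_def by (simp add: card_cartesian_product n_subsets)
  obtain f where fW': "f ` {..<n} \<subseteq> W" and inj: "inj_on f {..<n}"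
    using card_le_inj[of "{..<n}" W] fW cW n by auto
  define c where "c = (\<lambda>(u, v). if fst (f u) = fst (f v) then 2 * l
                         else (SOME a. a \<in> fst (f u) - fst (f v)))"
  have mem: "fst (f u) \<subseteq> {..<2*l}" "card (fst (f u)) = l" if "u < n" for u
  proof -
    have "f u \<in> W" using fW' that by auto
    thus "fst (f u) \<subseteq> {..<2*l}" "card (fst (f u)) = l" unfolding W_def by auto
  qed
  have ne: "(SOME a. a \<in> fst (f u) - fst (f v)) \<in> fst (f u) - fst (f v)"
    if "u < n" "v < n" "fst (f u) \<noteq> fst (f v)" for u v
  proof -
    have fin: "finite (fst (f v))" using mem[OF that(2)] finite_subset by blast
    have "\<not> fst (f u) \<subseteq> fst (f v)"
      using card_subset_eq[OF fin] mem[OF that(1)] mem[OF that(2)] that(3) by metis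
    hence "\<exists>a. a \<in> fst (f u) - fst (f v)" by blast
    thus ?thesis by (rule someI_ex)
  qed
  have cv: "c (u, v) = 2 * l \<and> fst (f u) = fst (f v) \<or>
            (fst (f u) \<noteq> fst (f v) \<and> c (u, v) \<in> fst (f u) - fst (f v) \<and> c (u, v) < 2 * l)"
    if "u < n" "v < n" for u v
    using ne[OF that] mem[OF that(1)] unfolding c_def by auto
  have col: "arc_colouring (K_V n) K_E (2 * l + 1) c"
    unfolding arc_colouring_def arcs_K using cv by fastforce
  have path: "no_mono_2path (K_V n) K_E c"
    unfolding no_mono_2path_def arcs_K
  proof (clarify)
    fix u v w assume a: "u < n" "v < n" "u \<noteq> v" "w < n" "v \<noteq> w" "w \<noteq> u"
      and eq: "c (u, v) = c (v, w)"
    show False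
    proof (cases "fst (f u) = fst (f v)")
      case True
      hence "c (u, v) = 2 * l" using cv[of u v] a by auto
      hence "fst (f v) = fst (f w)" using cv[of v w] a eq by auto
      moreover have "f u \<noteq> f v" "f v \<noteq> f w" "f w \<noteq> f u"
        using inj a by (auto dest: inj_onD)
      ultimately have "snd (f u) \<noteq> snd (f v)" "snd (f v) \<noteq> snd (f w)" "snd (f w) \<noteq> snd (f u)"
        using True by (auto simp: prod_eq_iff)
      thus False by auto
    next
      case False
      hence "c (u, v) \<notin> fst (f v)" "c (u, v) < 2 * l" using cv[of u v] a by auto
      thus False using cv[of v w] a eq by auto
    qed
  qed
  show ?thesis unfolding chi2_def by (rule Least_le) (use col path in blast)
qed

lemma enc_inj:
  fixes a b c d n :: nat
  assumes "b < n" "d < n" "a * n + b = c * n + d"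
  shows "a = c \<and> b = d"
proof -
  have "(a * n + b) mod n = b" using assms(1) by simp
  moreover have "(c * n + d) mod n = d" using assms(2) by simp
  ultimately have bd: "b = d" using assms(3) by metis
  hence "a * n = c * n" using assms by simp
  moreover have "n > 0" using assms by simp
  ultimately show ?thesis using bd by simp
qed

lemma enc_lt:
  fixes u v n :: nat
  assumes "u < n" "v < n"
  shows "u * n + v < n * n"
proof -
  have "u * n + v < u * n + n" using assms by simp
  also have "\<dots> = Suc u * n" by simp
  also have "\<dots> \<le> n * n" using assms by (intro mult_le_mono1) simp
  finally show ?thesis .
qed

lemma chi12_lower:
  assumes n: "(2 * l + 1) choose l < n"
  shows "2 * l + 1 < chi12 (K_V n) K_E"
proof -
  let ?P = "\<lambda>k. \<exists>c. arc_colouring (K_V n) K_E k c \<and> no_mono_2cycle (K_V n) K_E c \<and> no_mono_2path (K_V n) K_E c"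
  have ex: "?P (n * n)"
  proof (intro exI conjI)
    let ?c = "\<lambda>(u, v). u * n + v"
    show "arc_colouring (K_V n) K_E (n * n) ?c"
      unfolding arc_colouring_def arcs_K
      using enc_lt by auto
    show "no_mono_2cycle (K_V n) K_E ?c"
      unfolding no_mono_2cycle_def arcs_K
    proof (intro allI impI)
      fix u v assume "(u, v) \<in> {(u, v). u < n \<and> v < n \<and> u \<noteq> v}"
      hence "u < n" "v < n" "u \<noteq> v" by auto
      thus "?c (u, v) \<noteq> ?c (v, u)" using enc_inj[of v n u u v] by auto
    qed
    show "no_mono_2path (K_V n) K_E ?c"
      unfolding no_mono_2path_def arcs_K
    proof (intro allI impI)
      fix u v w assume "(u, v) \<in> {(u, v). u < n \<and> v < n \<and> u \<noteq> v} \<and>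
        (v, w) \<in> {(u, v). u < n \<and> v < n \<and> u \<noteq> v} \<and> w \<noteq> u"
      hence "u < n" "v < n" "w < n" "u \<noteq> v" "v \<noteq> w" "w \<noteq> u" by auto
      thus "?c (u, v) \<noteq> ?c (v, w)" using enc_inj[of v n w u v] by auto
    qed
  qed
  define k where "k = chi12 (K_V n) K_E"
  have "?P k" unfolding k_def chi12_def by (rule LeastI_ex) (use ex in blast)
  then obtain c where col: "arc_colouring (K_V n) K_E k c"
    and cyc: "no_mono_2cycle (K_V n) K_E c" and path: "no_mono_2path (K_V n) K_E c" by blast
  show ?thesis unfolding k_def[symmetric]
  proof (rule ccontr)
    assume "\<not> 2 * l + 1 < k"
    hence kle: "k \<le> 2 * l + 1" by simp
    define Out where "Out = (\<lambda>v. {c (v, w) | w. w < n \<and> w \<noteq> v})"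
    have colr: "c (u, v) < k" if "u < n" "v < n" "u \<noteq> v" for u v
      using col that unfolding arc_colouring_def arcs_K by auto
    have sub: "Out v \<subseteq> {..<2 * l + 1}" if "v < n" for v
      using colr that kle unfolding Out_def by fastforce
    have key: "\<not> Out u \<subseteq> Out v" if "u < n" "v < n" "u \<noteq> v" for u v
    proof
      assume "Out u \<subseteq> Out v"
      moreover have "c (u, v) \<in> Out u" using that unfolding Out_def by auto
      ultimately obtain w where w: "w < n" "w \<noteq> v" "c (u, v) = c (v, w)"
        unfolding Out_def by auto
      show False
      proof (cases "w = u")
        case True
        thus False using cyc w that unfolding no_mono_2cycle_def arcs_K by auto
      next
        case False
        thus False using path w that unfolding no_mono_2path_def arcs_K by blast
      qed
    qed
    have inj: "inj_on Out {..<n}"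
      by (rule inj_onI) (use key in fastforce)
    have "card (Out ` {..<n}) \<le> card {..<2 * l + 1} choose (card {..<2 * l + 1} div 2)"
    proof (rule sperner)
      show "Out ` {..<n} \<subseteq> Pow {..<2 * l + 1}" using sub by auto
      fix A B assume "A \<in> Out ` {..<n}" "B \<in> Out ` {..<n}" "A \<subseteq> B"
      thus "A = B" using key by fastforce
    qed simp
    moreover have "card (Out ` {..<n}) = n" using card_image[OF inj] by simp
    moreover have "(2 * l + 1) div 2 = l" by simp
    ultimately show False using n by simp
  qed
qed

theorem proposition4p2:
  fixes l n :: nat
  assumes "l \<ge> 2"
    and "n = ((2 * l + 1) choose l) + 1"
  shows "chi2 (K_V n) K_E < chi12 (K_V n) K_E"
proof -
  have "chi2 (K_V n) K_E \<le> 2 * l + 1"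
    by (rule chi2_upper) (use binom_ineq[of l] assms in simp)
  also have "\<dots> < chi12 (K_V n) K_E"
    by (rule chi12_lower) (use assms in simp)
  finally show ?thesis .
qed

end
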